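(* Let $\kappa$ be an infinite cardinal and let $X$ be a strongly zero-dimensional space. Then $X$ is an $F_\kappa$-space if and only if its Stone–Čech compactification $\beta X$ is an $F_\kappa$-space.
   Context: A space is zero-dimensional if it has a base of clopen sets; a Tychonoff space $X$ is strongly zero-dimensional if $\beta X$ is zero-dimensional. For a zero-dimensional space $X$ and an open $U\subseteq X$, the ($X$-)type $\tau(U)$ is the least cardinal $\tau$ such that $U$ is a union of $\tau$ many clopen subsets of $X$. A zero-dimensional space is an $F_\kappa$-space if every open subset of type less than $\kappa$ is $C^*$-embedded (every bounded continuous real-valued function on it extends continuously to the whole space). *)

theory Defs
  imports "HOL-Analysis.Analysis"
begin

definition zero_dimensional_space :: "'a topology \<Rightarrow> bool" where
  "zero_dimensional_space X \<longleftrightarrow>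
     (\<forall>U x. openin X U \<and> x \<in> U \<longrightarrow>
        (\<exists>C. openin X C \<and> closedin X C \<and> x \<in> C \<and> C \<subseteq> U))"

definition C_star_embedded :: "'a topology \<Rightarrow> 'a set \<Rightarrow> bool" where
  "C_star_embedded X U \<longleftrightarrow>
     (\<forall>f. continuous_map (subtopology X U) euclideanreal f \<and>
          (\<exists>B. \<forall>x\<in>U. \<bar>f x\<bar> \<le> B) \<longrightarrow>
        (\<exists>g. continuous_map X euclideanreal g \<and> (\<forall>x\<in>U. g x = f x)))"

definition type_less :: "'a topology \<Rightarrow> 'a set \<Rightarrow> 'c set \<Rightarrow> bool" where
  "type_less X U K \<longleftrightarrow>
     (\<exists>\<F>. (\<forall>C\<in>\<F>. openin X C \<and> closedin X C) \<and> \<Union>\<F> = U \<and>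
          (card_of \<F>, card_of K) \<in> ordLess)"

definition F_kappa_space :: "'c set \<Rightarrow> 'a topology \<Rightarrow> bool" where
  "F_kappa_space K X \<longleftrightarrow> zero_dimensional_space X \<and>
     (\<forall>U. openin X U \<and> type_less X U K \<longrightarrow> C_star_embedded X U)"

definition stone_cech_compactification ::
    "'a topology \<Rightarrow> 'b topology \<Rightarrow> ('a \<Rightarrow> 'b) \<Rightarrow> bool" where
  "stone_cech_compactification X Y e \<longleftrightarrow>
     compact_space Y \<and> Hausdorff_space Y \<and> embedding_map X Y e \<and>
     Y closure_of (e ` topspace X) = topspace Y \<and>
     (\<forall>f. continuous_map X euclideanreal f \<and> (\<exists>B. \<forall>x\<in>topspace X. \<bar>f x\<bar> \<le> B) \<longrightarrow>
        (\<exists>g. continuous_map Y euclideanreal g \<and> (\<forall>x\<in>topspace X. g (e x) = f x)))"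

definition strongly_zero_dimensional_wrt ::
    "'a topology \<Rightarrow> 'b topology \<Rightarrow> ('a \<Rightarrow> 'b) \<Rightarrow> bool" where
  "strongly_zero_dimensional_wrt X Y e \<longleftrightarrow>
     completely_regular_space X \<and> Hausdorff_space X \<and>
     stone_cech_compactification X Y e \<and> zero_dimensional_space Y"

end

theory Submission imports Defs begin

lemma dense_open_lemma:
  assumes cl: "Y closure_of D = topspace Y" and W: "openin Y W"
    and S: "closedin (subtopology Y W) S" and sub: "W \<inter> D \<subseteq> S"
  shows "W \<subseteq> S"
proof
  fix y assume yW: "y \<in> W"
  show "y \<in> S"
  proof (rule ccontr)
    assume yS: "y \<notin> S"
    obtain T where T: "closedin Y T" "S = T \<inter> W" using S closedin_subtopology by metis
    have "openin Y (W - T)" using W T(1) by blast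
    moreover have "y \<in> W - T" using yW yS T(2) by blast
    moreover have "y \<in> Y closure_of D" using cl yW openin_subset[OF W] by blast
    ultimately obtain z where "z \<in> D" "z \<in> W - T" unfolding in_closure_of by blast
    then show False using sub T(2) by blast
  qed
qed

lemma emb_facts:
  assumes "embedding_map X Y e"
  shows "continuous_map X Y e" "inj_on e (topspace X)"
    "\<And>U. openin X U \<Longrightarrow> \<exists>W. openin Y W \<and> U = {x \<in> topspace X. e x \<in> W}"
proof -
  have h: "homeomorphic_map X (subtopology Y (e ` topspace X)) e"
    using assms by (simp add: embedding_map_def)
  show "continuous_map X Y e"
    using homeomorphic_imp_continuous_map[OF h] continuous_map_in_subtopology by blast
  show inj: "inj_on e (topspace X)" using homeomorphic_imp_injective_map[OF h] .
  fix U assume U: "openin X U"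
  have "openin (subtopology Y (e ` topspace X)) (e ` U)"
    using homeomorphic_map_openness[OF h openin_subset[OF U]] U by simp
  then obtain W where W: "openin Y W" "e ` U = W \<inter> e ` topspace X"
    using openin_subtopology by metis
  have "U = {x \<in> topspace X. e x \<in> W}"
  proof -
    have "U \<subseteq> topspace X" using openin_subset[OF U] .
    moreover have "x \<in> U" if "x \<in> topspace X" "e x \<in> W" for x
    proof -
      have "e x \<in> e ` U" using W that by blast
      then obtain u where "u \<in> U" "e x = e u" by blast
      then show ?thesis using inj that \<open>U \<subseteq> topspace X\<close> by (metis inj_onD subsetD)
    qed
    ultimately show ?thesis using W by blast
  qed
  then show "\<exists>W. openin Y W \<and> U = {x \<in> topspace X. e x \<in> W}" using W by blast
qed

lemma clamp_cont:
  "continuous_map X euclideanreal h \<Longrightarrow> continuous_map X euclideanreal (\<lambda>x. max (-B) (min B (h x)))"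
  by (intro continuous_map_real_max continuous_map_real_min continuous_map_const[THEN iffD2]) auto

lemma eq_closed:
  "continuous_map X euclideanreal p \<Longrightarrow> continuous_map X euclideanreal q \<Longrightarrow> closedin X {x \<in> topspace X. p x = q x}"
  by (rule closedin_continuous_maps_eq) auto


lemma star_exists:
  assumes SC: "stone_cech_compactification X Y e"
    and C: "openin X C" "closedin X C"
  shows "\<exists>D. openin Y D \<and> closedin Y D \<and> (\<forall>x\<in>topspace X. e x \<in> D \<longleftrightarrow> x \<in> C)"
proof -
  have cl: "Y closure_of (e ` topspace X) = topspace Y"
    and emb: "embedding_map X Y e" using SC by (auto simp: stone_cech_compactification_def)
  have ce: "continuous_map X Y e" using emb_facts[OF emb] by blast
  define ind where "ind = (\<lambda>x. if x \<in> C then (1::real) else 0)"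
  have fr: "X frontier_of C = {}"
    using C by (simp add: frontier_of_def closure_of_closedin interior_of_openin)
  have ci: "continuous_map X euclideanreal ind"
    unfolding ind_def
    by (rule continuous_map_cases) (use fr in auto)
  have "\<exists>B. \<forall>x\<in>topspace X. \<bar>ind x\<bar> \<le> B" by (rule exI[of _ 1]) (auto simp: ind_def)
  then obtain H where H: "continuous_map Y euclideanreal H" "\<And>x. x \<in> topspace X \<Longrightarrow> H (e x) = ind x"
    using SC ci unfolding stone_cech_compactification_def by blast
  have cl01: "closedin Y {y \<in> topspace Y. H y \<in> {0,1}}"
    by (rule closedin_continuous_map_preimage[OF H(1)]) (auto intro: finite_imp_closed)
  have "topspace Y \<subseteq> {y \<in> topspace Y. H y \<in> {0,1}}"
  proof (rule dense_open_lemma[OF cl])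
    show "openin Y (topspace Y)" by simp
    show "closedin (subtopology Y (topspace Y)) {y \<in> topspace Y. H y \<in> {0, 1}}" using cl01 by simp
    show "topspace Y \<inter> e ` topspace X \<subseteq> {y \<in> topspace Y. H y \<in> {0, 1}}"
      using H(2) by (auto simp: ind_def)
  qed
  then have h01: "\<And>y. y \<in> topspace Y \<Longrightarrow> H y = 0 \<or> H y = 1" by blast
  define D where "D = {y \<in> topspace Y. H y \<in> {1}}"
  have "closedin Y D" unfolding D_def
    by (rule closedin_continuous_map_preimage[OF H(1)]) auto
  moreover have "D = {y \<in> topspace Y. H y \<in> {1/2<..}}"
    unfolding D_def using h01 by force
  then have "openin Y D"
    using openin_continuous_map_preimage[OF H(1), of "{1/2<..}"] by auto
  moreover have "\<forall>x\<in>topspace X. e x \<in> D \<longleftrightarrow> x \<in> C"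
    using H(2) continuous_map_image_subset_topspace[OF ce] by (auto simp: D_def ind_def)
  ultimately show ?thesis by blast
qed

lemma dir1:
  assumes SC: "stone_cech_compactification X Y e" and zY: "zero_dimensional_space Y"
    and FX: "F_kappa_space K X"
  shows "F_kappa_space K Y"
  unfolding F_kappa_space_def
proof (intro conjI zY allI impI)
  have cl: "Y closure_of (e ` topspace X) = topspace Y"
    and emb: "embedding_map X Y e" using SC by (auto simp: stone_cech_compactification_def)
  have ce: "continuous_map X Y e" using emb_facts[OF emb] by blast
  fix V assume "openin Y V \<and> type_less Y V K"
  then have V: "openin Y V" and tV: "type_less Y V K" by auto
  obtain G where G: "\<forall>D\<in>G. openin Y D \<and> closedin Y D" "\<Union>G = V" "(card_of G, card_of K) \<in> ordLess"
    using tV unfolding type_less_def by blast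
  define U where "U = {x \<in> topspace X. e x \<in> V}"
  define pre where "pre D = {x \<in> topspace X. e x \<in> D}" for D
  have oU: "openin X U" unfolding U_def by (rule openin_continuous_map_preimage[OF ce V])
  have "type_less X U K" unfolding type_less_def
  proof (intro exI conjI)
    show "\<forall>C\<in>pre ` G. openin X C \<and> closedin X C"
    proof
      fix C assume "C \<in> pre ` G"
      then obtain D where D: "D \<in> G" "C = pre D" by blast
      then show "openin X C \<and> closedin X C" using G(1) ce
        by (simp add: pre_def openin_continuous_map_preimage closedin_continuous_map_preimage)
    qed
    have "U = {x \<in> topspace X. e x \<in> \<Union>G}" using G(2) by (simp add: U_def)
    then show "\<Union> (pre ` G) = U" by (auto simp: pre_def)
    show "(card_of (pre ` G), card_of K) \<in> ordLess" using ordLeq_ordLess_trans[OF card_of_image G(3)] .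
  qed
  then have CU: "C_star_embedded X U" using FX oU by (simp add: F_kappa_space_def)
  show "C_star_embedded Y V" unfolding C_star_embedded_def
  proof (intro allI impI)
    fix g assume "continuous_map (subtopology Y V) euclideanreal g \<and> (\<exists>B. \<forall>x\<in>V. \<bar>g x\<bar> \<le> B)"
    then obtain B where g: "continuous_map (subtopology Y V) euclideanreal g" and B: "\<And>x. x \<in> V \<Longrightarrow> \<bar>g x\<bar> \<le> B"
      by blast
    define B' where "B' = max B 0"
    have B': "\<And>x. x \<in> V \<Longrightarrow> \<bar>g x\<bar> \<le> B'" "B' \<ge> 0" using B unfolding B'_def by force+
    have ceU: "continuous_map (subtopology X U) (subtopology Y V) e"
      unfolding continuous_map_in_subtopology
      using continuous_map_from_subtopology[OF ce] by (auto simp: U_def)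
    have "continuous_map (subtopology X U) euclideanreal (g \<circ> e)"
      using continuous_map_compose[OF ceU g] .
    moreover have "\<exists>B. \<forall>x\<in>U. \<bar>(g \<circ> e) x\<bar> \<le> B" using B by (auto simp: U_def)
    ultimately have "\<exists>h. continuous_map X euclideanreal h \<and> (\<forall>x\<in>U. h x = (g \<circ> e) x)"
      using CU[unfolded C_star_embedded_def, rule_format, of "g \<circ> e"] by blast
    then obtain h where h: "continuous_map X euclideanreal h" "\<And>x. x \<in> U \<Longrightarrow> h x = g (e x)"
      by auto
    define h' where "h' = (\<lambda>x. max (-B') (min B' (h x)))"
    have ch': "continuous_map X euclideanreal h'" unfolding h'_def by (rule clamp_cont[OF h(1)])
    have "\<exists>B. \<forall>x\<in>topspace X. \<bar>h' x\<bar> \<le> B" using B'(2) by (intro exI[of _ B']) (auto simp: h'_def)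
    then obtain H where H: "continuous_map Y euclideanreal H" "\<And>x. x \<in> topspace X \<Longrightarrow> H (e x) = h' x"
      using SC ch' unfolding stone_cech_compactification_def by blast
    have "V \<subseteq> {y \<in> topspace (subtopology Y V). H y = g y}"
    proof (rule dense_open_lemma[OF cl V])
      show "closedin (subtopology Y V) {y \<in> topspace (subtopology Y V). H y = g y}"
        by (rule eq_closed[OF continuous_map_from_subtopology[OF H(1)] g])
      show "V \<inter> e ` topspace X \<subseteq> {y \<in> topspace (subtopology Y V). H y = g y}"
      proof
        fix y assume "y \<in> V \<inter> e ` topspace X"
        then obtain x where x: "x \<in> topspace X" "y = e x" "e x \<in> V" by blast
        then have "x \<in> U" by (simp add: U_def)
        then have "H y = g y" using H(2)[OF x(1)] h(2) B'(1)[OF x(3)] x(2)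
          by (auto simp: h'_def abs_le_iff)
        then show "y \<in> {y \<in> topspace (subtopology Y V). H y = g y}"
          using x openin_subset[OF V] by auto
      qed
    qed
    then show "\<exists>G. continuous_map Y euclideanreal G \<and> (\<forall>x\<in>V. G x = g x)" using H(1) by blast
  qed
qed


lemma dir2:
  assumes SC: "stone_cech_compactification X Y e" and FY: "F_kappa_space K Y"
  shows "F_kappa_space K X"
proof -
  have cl: "Y closure_of (e ` topspace X) = topspace Y"
    and emb: "embedding_map X Y e" using SC by (auto simp: stone_cech_compactification_def)
  have ce: "continuous_map X Y e" using emb_facts[OF emb] by blast
  have zY: "zero_dimensional_space Y" using FY by (simp add: F_kappa_space_def)
  have zX: "zero_dimensional_space X"
    unfolding zero_dimensional_space_def
  proof (intro allI impI)
    fix U x assume Ux: "openin X U \<and> x \<in> U"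
    obtain W where W: "openin Y W" "U = {x \<in> topspace X. e x \<in> W}"
      using emb_facts(3)[OF emb] Ux by blast
    have x: "x \<in> topspace X" "e x \<in> W" using Ux W(2) by auto
    obtain D where D: "openin Y D" "closedin Y D" "e x \<in> D" "D \<subseteq> W"
      using zY W(1) x(2) unfolding zero_dimensional_space_def by blast
    show "\<exists>C. openin X C \<and> closedin X C \<and> x \<in> C \<and> C \<subseteq> U"
    proof (intro exI conjI)
      show "openin X {x \<in> topspace X. e x \<in> D}" by (rule openin_continuous_map_preimage[OF ce D(1)])
      show "closedin X {x \<in> topspace X. e x \<in> D}" by (rule closedin_continuous_map_preimage[OF ce D(2)])
      show "x \<in> {x \<in> topspace X. e x \<in> D}" using x D by simp
      show "{x \<in> topspace X. e x \<in> D} \<subseteq> U" using D(4) W(2) by auto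
    qed
  qed
  define star where "star C = (SOME D. openin Y D \<and> closedin Y D \<and> (\<forall>x\<in>topspace X. e x \<in> D \<longleftrightarrow> x \<in> C))" for C
  have star: "openin Y (star C) \<and> closedin Y (star C) \<and> (\<forall>x\<in>topspace X. e x \<in> star C \<longleftrightarrow> x \<in> C)"
    if "openin X C" "closedin X C" for C
    unfolding star_def by (rule someI_ex[OF star_exists[OF SC that]])
  show ?thesis unfolding F_kappa_space_def
  proof (intro conjI zX allI impI)
    fix U assume "openin X U \<and> type_less X U K"
    then have oU: "openin X U" and tU: "type_less X U K" by auto
    obtain F where F: "\<forall>C\<in>F. openin X C \<and> closedin X C" "\<Union>F = U" "(card_of F, card_of K) \<in> ordLess"
      using tU unfolding type_less_def by blast
    have Usub: "U \<subseteq> topspace X" using openin_subset[OF oU] .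
    show "C_star_embedded X U" unfolding C_star_embedded_def
    proof (intro allI impI)
      fix f assume "continuous_map (subtopology X U) euclideanreal f \<and> (\<exists>B. \<forall>x\<in>U. \<bar>f x\<bar> \<le> B)"
      then obtain B where fc: "continuous_map (subtopology X U) euclideanreal f" and B: "\<And>x. x \<in> U \<Longrightarrow> \<bar>f x\<bar> \<le> B"
        by blast
      define B' where "B' = max B 0"
      have B': "\<And>x. x \<in> U \<Longrightarrow> \<bar>f x\<bar> \<le> B'" "B' \<ge> 0" using B unfolding B'_def by force+
      define fC where "fC C x = (if x \<in> C then f x else 0)" for C x
      have cfC: "continuous_map X euclideanreal (fC C)" if C: "C \<in> F" for C
      proof -
        have Cc: "openin X C" "closedin X C" using F(1) C by auto
        have CU: "C \<subseteq> U" using F(2) C by blast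
        have fr: "X frontier_of C = {}"
          using Cc by (simp add: frontier_of_def closure_of_closedin interior_of_openin)
        show ?thesis unfolding fC_def
        proof (rule continuous_map_cases)
          show "continuous_map (subtopology X (X closure_of {x. x \<in> C})) euclideanreal f"
            using continuous_map_from_subtopology_mono[OF fc CU] Cc by (simp add: closure_of_closedin)
          show "continuous_map (subtopology X (X closure_of {x. x \<notin> C})) euclideanreal (\<lambda>x. 0)"
            by simp
          show "\<And>x. x \<in> X frontier_of {x. x \<in> C} \<Longrightarrow> f x = 0" using fr by simp
        qed
      qed
      define HC where "HC C = (SOME H. continuous_map Y euclideanreal H \<and> (\<forall>x\<in>topspace X. H (e x) = fC C x))" for C
      have HC: "continuous_map Y euclideanreal (HC C) \<and> (\<forall>x\<in>topspace X. HC C (e x) = fC C x)"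
        if C: "C \<in> F" for C
      proof -
        have "\<exists>B. \<forall>x\<in>topspace X. \<bar>fC C x\<bar> \<le> B"
          using B' Usub F(2) C by (intro exI[of _ B']) (auto simp: fC_def)
        then have "\<exists>H. continuous_map Y euclideanreal H \<and> (\<forall>x\<in>topspace X. H (e x) = fC C x)"
          using SC cfC[OF C] unfolding stone_cech_compactification_def by blast
        then show ?thesis unfolding HC_def by (rule someI_ex)
      qed
      define H' where "H' C y = max (-B') (min B' (HC C y))" for C y
      have H'c: "continuous_map Y euclideanreal (H' C)" if "C \<in> F" for C
        unfolding H'_def by (rule clamp_cont) (use HC[OF that] in blast)
      have H'e: "H' C (e x) = f x" if "C \<in> F" "x \<in> C" for C x
      proof -
        have "x \<in> U" "x \<in> topspace X" using that F(2) Usub by auto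
        then show ?thesis using HC[OF that(1)] B'(1)[OF \<open>x \<in> U\<close>] that(2)
          by (auto simp: H'_def fC_def abs_le_iff)
      qed
      have agree: "H' C y = H' D y" if CD: "C \<in> F" "D \<in> F" "y \<in> star C" "y \<in> star D" for C D y
      proof -
        have sC: "openin Y (star C) \<and> closedin Y (star C) \<and> (\<forall>x\<in>topspace X. e x \<in> star C \<longleftrightarrow> x \<in> C)"
          using star F(1) CD(1) by blast
        have sD: "openin Y (star D) \<and> closedin Y (star D) \<and> (\<forall>x\<in>topspace X. e x \<in> star D \<longleftrightarrow> x \<in> D)"
          using star F(1) CD(2) by blast
        define W where "W = star C \<inter> star D"
        have oW: "openin Y W" using sC sD unfolding W_def by blast
        have "W \<subseteq> {y \<in> topspace (subtopology Y W). H' C y = H' D y}"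
        proof (rule dense_open_lemma[OF cl oW])
          show "closedin (subtopology Y W) {y \<in> topspace (subtopology Y W). H' C y = H' D y}"
            by (rule eq_closed[OF continuous_map_from_subtopology[OF H'c[OF CD(1)]]
                  continuous_map_from_subtopology[OF H'c[OF CD(2)]]])
          show "W \<inter> e ` topspace X \<subseteq> {y \<in> topspace (subtopology Y W). H' C y = H' D y}"
          proof
            fix z assume "z \<in> W \<inter> e ` topspace X"
            then obtain x where x: "x \<in> topspace X" "z = e x" "e x \<in> W" by blast
            then have "x \<in> C" "x \<in> D" using sC sD unfolding W_def by auto
            then have "H' C z = H' D z" using H'e CD x(2) by simp
            then show "z \<in> {y \<in> topspace (subtopology Y W). H' C y = H' D y}"
              using x openin_subset[OF oW] by auto
          qed
        qed
        then show ?thesis using CD unfolding W_def by auto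
      qed
      define V where "V = \<Union>(star ` F)"
      define g where "g y = H' (SOME C. C \<in> F \<and> y \<in> star C) y" for y
      have g_eq: "g y = H' C y" if "C \<in> F" "y \<in> star C" for C y
      proof -
        have "(SOME C. C \<in> F \<and> y \<in> star C) \<in> F \<and> y \<in> star (SOME C. C \<in> F \<and> y \<in> star C)"
          using that by (metis (mono_tags, lifting) someI)
        then show ?thesis unfolding g_def using agree that by blast
      qed
      have starC: "openin Y (star C) \<and> closedin Y (star C) \<and> (\<forall>x\<in>topspace X. e x \<in> star C \<longleftrightarrow> x \<in> C)"
        if "C \<in> F" for C using star F(1) that by blast
      have oV: "openin Y V" unfolding V_def using starC by blast
      have tV: "type_less Y V K" unfolding type_less_def
      proof (intro exI conjI)
        show "\<forall>C\<in>star ` F. openin Y C \<and> closedin Y C" using starC by blast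
        show "\<Union> (star ` F) = V" by (simp add: V_def)
        show "(card_of (star ` F), card_of K) \<in> ordLess" using ordLeq_ordLess_trans[OF card_of_image F(3)] .
      qed
      have CV: "C_star_embedded Y V" using FY oV tV by (simp add: F_kappa_space_def)
      have gc: "continuous_map (subtopology Y V) euclideanreal g"
        unfolding continuous_map_def
      proof (intro conjI allI impI)
        show "g \<in> topspace (subtopology Y V) \<rightarrow> topspace euclideanreal" by simp
        fix T :: "real set" assume "openin euclideanreal T"
        then have oT: "open T" by simp
        have eq: "{y \<in> topspace (subtopology Y V). g y \<in> T} = (\<Union>C\<in>F. star C \<inter> {y \<in> topspace Y. H' C y \<in> T})"
        proof (rule set_eqI, rule iffI)
          fix y assume "y \<in> {y \<in> topspace (subtopology Y V). g y \<in> T}"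
          then obtain C where "C \<in> F" "y \<in> star C" "y \<in> topspace Y" "g y \<in> T" by (auto simp: V_def)
          then show "y \<in> (\<Union>C\<in>F. star C \<inter> {y \<in> topspace Y. H' C y \<in> T})" using g_eq by auto
        next
          fix y assume "y \<in> (\<Union>C\<in>F. star C \<inter> {y \<in> topspace Y. H' C y \<in> T})"
          then obtain C where "C \<in> F" "y \<in> star C" "y \<in> topspace Y" "H' C y \<in> T" by auto
          then show "y \<in> {y \<in> topspace (subtopology Y V). g y \<in> T}" using g_eq by (auto simp: V_def)
        qed
        have "openin Y (\<Union>C\<in>F. star C \<inter> {y \<in> topspace Y. H' C y \<in> T})"
        proof (rule openin_Union, clarify)
          fix C assume "C \<in> F"
          then show "openin Y (star C \<inter> {y \<in> topspace Y. H' C y \<in> T})"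
            using starC[OF \<open>C \<in> F\<close>] openin_continuous_map_preimage[OF H'c[OF \<open>C \<in> F\<close>], of T] oT
            by (intro openin_Int) auto
        qed
        moreover have "(\<Union>C\<in>F. star C \<inter> {y \<in> topspace Y. H' C y \<in> T}) \<subseteq> V" by (auto simp: V_def)
        ultimately show "openin (subtopology Y V) {y \<in> topspace (subtopology Y V). g y \<in> T}"
          using eq openin_open_subtopology[OF oV] by simp
      qed
      have gb: "\<exists>B. \<forall>y\<in>V. \<bar>g y\<bar> \<le> B"
        using B'(2) by (intro exI[of _ B']) (auto simp: g_def H'_def abs_le_iff)
      have "\<exists>G. continuous_map Y euclideanreal G \<and> (\<forall>y\<in>V. G y = g y)"
        using CV[unfolded C_star_embedded_def, rule_format, of g] gc gb by blast
      then obtain G where G: "continuous_map Y euclideanreal G" "\<And>y. y \<in> V \<Longrightarrow> G y = g y" by blast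
      show "\<exists>h. continuous_map X euclideanreal h \<and> (\<forall>x\<in>U. h x = f x)"
      proof (intro exI conjI ballI)
        show "continuous_map X euclideanreal (G \<circ> e)" by (rule continuous_map_compose[OF ce G(1)])
        fix x assume "x \<in> U"
        then obtain C where C: "C \<in> F" "x \<in> C" using F(2) by blast
        have "x \<in> topspace X" using \<open>x \<in> U\<close> Usub by blast
        then have ex: "e x \<in> star C" using starC[OF C(1)] C(2) by blast
        then have "e x \<in> V" using C(1) by (auto simp: V_def)
        then show "(G \<circ> e) x = f x" using G(2) g_eq[OF C(1) ex] H'e[OF C] by simp
      qed
    qed
  qed
qed

theorem theorem5p1:
  fixes X :: "'a topology" and bX :: "'b topology" and e :: "'a \<Rightarrow> 'b"
    and K :: "'c set"
  assumes "infinite K"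
    and "stone_cech_compactification X bX e"
    and "strongly_zero_dimensional_wrt X bX e"
  shows "F_kappa_space K X \<longleftrightarrow> F_kappa_space K bX"
  using dir1[OF assms(2)] dir2[OF assms(2)] assms(3)
  by (auto simp: strongly_zero_dimensional_wrt_def)

end
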